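(* In the setting below, let $I\subseteq\{0,\dots,n\}$ and $J\subseteq\{0,\dots,m\}$ be intervals of equal length such that every point of $I\times J$ is $2\Delta$-relevant, where $\Delta\ge1$. Then the sumset $\{(i,f(i)) : i\in I\}+\{(j,g(j)) : j\in J\}\subseteq\mathbb{Z}^2$ has size $O(\Delta\cdot(|I|+|J|))$.
   Context: Setting: $f\colon\{0,\dots,n\}\to\mathbb{Z}$, $g\colon\{0,\dots,m\}\to\mathbb{Z}$, and convex functions $\breve f\colon\{0,\dots,n\}\to\mathbb{Q}$, $\breve g\colon\{0,\dots,m\}\to\mathbb{Q}$ (convex: $F(i)-F(i-1)\le F(i+1)-F(i)$ for interior $i$) with $\breve f\le f\le\breve f+\Delta$ and $\breve g\le g\le\breve g+\Delta$ pointwise. Let $\breve h(k)=\min_{i+j=k}\breve f(i)+\breve g(j)$. A point $(i,j)$ is $\delta$-relevant if $\breve f(i)+\breve g(j)\le\breve h(i+j)+\delta$. The sumset of $A,B\subseteq\mathbb{Z}^2$ is $A+B=\{a+b : a\in A,b\in B\}$ with componentwise addition. *)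

theory Defs
  imports Complex_Main
begin

definition dconvex :: "nat \<Rightarrow> (nat \<Rightarrow> rat) \<Rightarrow> bool" where
  "dconvex n F \<longleftrightarrow> (\<forall>i. 0 < i \<and> i < n \<longrightarrow> F i - F (i - 1) \<le> F (i + 1) - F i)"

definition hconv :: "nat \<Rightarrow> nat \<Rightarrow> (nat \<Rightarrow> rat) \<Rightarrow> (nat \<Rightarrow> rat) \<Rightarrow> nat \<Rightarrow> rat" where
  "hconv n m F G k = Min {F i + G j | i j. i \<le> n \<and> j \<le> m \<and> i + j = k}"

definition relevant :: "nat \<Rightarrow> nat \<Rightarrow> (nat \<Rightarrow> rat) \<Rightarrow> (nat \<Rightarrow> rat) \<Rightarrow> rat \<Rightarrow> nat \<Rightarrow> nat \<Rightarrow> bool" where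
  "relevant n m F G \<delta> i j \<longleftrightarrow> F i + G j \<le> hconv n m F G (i + j) + \<delta>"

definition sumset :: "(int \<times> int) set \<Rightarrow> (int \<times> int) set \<Rightarrow> (int \<times> int) set" where
  "sumset A B = {(fst a + fst b, snd a + snd b) | a b. a \<in> A \<and> b \<in> B}"

end

theory Submission
  imports Defs
begin

lemma hconv_le:
  assumes "i \<le> n" "j \<le> m"
  shows "hconv n m F G (i + j) \<le> F i + G j"
proof -
  have fin: "finite {F i + G j | i j. i \<le> n \<and> j \<le> m \<and> i + j = k}" for k
  proof (rule finite_subset)
    show "{F i + G j | i j. i \<le> n \<and> j \<le> m \<and> i + j = k} \<subseteq> (\<lambda>(i,j). F i + G j) ` ({..n}\<times>{..m})"
      by auto
  qed auto
  show ?thesis unfolding hconv_def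
    by (rule Min_le[OF fin]) (use assms in blast)
qed

lemma main_bound:
  fixes f g :: "nat \<Rightarrow> int" and fb gb :: "nat \<Rightarrow> rat" and \<Delta> :: rat
  assumes fbd: "\<forall>i\<le>n. fb i \<le> of_int (f i) \<and> of_int (f i) \<le> fb i + \<Delta>"
    and gbd: "\<forall>j\<le>m. gb j \<le> of_int (g j) \<and> of_int (g j) \<le> gb j + \<Delta>"
    and D: "\<Delta> \<ge> 1"
    and I: "{a..<a+L} \<subseteq> {0..n}" and J: "{b..<b+L} \<subseteq> {0..m}"
    and rel: "\<forall>i\<in>{a..<a+L}. \<forall>j\<in>{b..<b+L}. relevant n m fb gb (2 * \<Delta>) i j"
  shows "real (card (sumset {(int i, f i) | i. i \<in> {a..<a+L}}
                               {(int j, g j) | j. j \<in> {b..<b+L}}))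
           \<le> 5 * real_of_rat \<Delta> * real (card {a..<a+L} + card {b..<b+L})"
proof -
  define H where "H k = hconv n m fb gb k" for k
  define S where "S = (\<lambda>(k,t). (int k, \<lceil>H k\<rceil> + t)) ` ({a+b..<a+b+2*L} \<times> {0..\<lfloor>4*\<Delta>\<rfloor>})"
  have sub: "sumset {(int i, f i) | i. i \<in> {a..<a+L}} {(int j, g j) | j. j \<in> {b..<b+L}} \<subseteq> S"
  proof
    fix p assume "p \<in> sumset {(int i, f i) | i. i \<in> {a..<a+L}} {(int j, g j) | j. j \<in> {b..<b+L}}"
    then obtain i j where ij: "i \<in> {a..<a+L}" "j \<in> {b..<b+L}" and p: "p = (int (i+j), f i + g j)"
      unfolding sumset_def by auto
    have "i \<le> n" "j \<le> m" using ij I J by auto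
    have h1: "H (i+j) \<le> fb i + gb j" unfolding H_def by (rule hconv_le) fact+
    have h2: "fb i + gb j \<le> H (i+j) + 2*\<Delta>" using rel ij unfolding relevant_def H_def by auto
    have y1: "fb i + gb j \<le> of_int (f i + g j)" using fbd gbd \<open>i \<le> n\<close> \<open>j \<le> m\<close> by force
    have y2: "of_int (f i + g j) \<le> fb i + gb j + 2*\<Delta>" using fbd gbd \<open>i \<le> n\<close> \<open>j \<le> m\<close> by force
    define t where "t = f i + g j - \<lceil>H (i+j)\<rceil>"
    have "\<lceil>H (i+j)\<rceil> \<le> f i + g j" using h1 y1 by (simp add: ceiling_le_iff)
    hence t0: "0 \<le> t" unfolding t_def by simp
    have "of_int t \<le> of_int (f i + g j) - H (i+j)" unfolding t_def using le_of_int_ceiling[of "H (i+j)"] by simp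
    also have "\<dots> \<le> 4*\<Delta>" using h2 y2 by simp
    finally have "t \<le> \<lfloor>4*\<Delta>\<rfloor>" by (simp add: le_floor_iff)
    moreover have "i + j \<in> {a+b..<a+b+2*L}" using ij by auto
    ultimately show "p \<in> S" unfolding S_def p using t0
      by (intro image_eqI[where x="(i+j, t)"]) (auto simp: t_def)
  qed
  have "card (sumset {(int i, f i) | i. i \<in> {a..<a+L}} {(int j, g j) | j. j \<in> {b..<b+L}}) \<le> card S"
    by (rule card_mono[OF _ sub]) (simp add: S_def)
  also have "card S \<le> card ({a+b..<a+b+2*L} \<times> {0..\<lfloor>4*\<Delta>\<rfloor>})"
    unfolding S_def by (rule card_image_le) simp
  also have "\<dots> = 2*L * nat (\<lfloor>4*\<Delta>\<rfloor> + 1)" by (simp add: card_cartesian_product)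
  finally have c0: "card (sumset {(int i, f i) | i. i \<in> {a..<a+L}} {(int j, g j) | j. j \<in> {b..<b+L}})
     \<le> 2*L * nat (\<lfloor>4*\<Delta>\<rfloor> + 1)" .
  have c: "real (card (sumset {(int i, f i) | i. i \<in> {a..<a+L}} {(int j, g j) | j. j \<in> {b..<b+L}}))
     \<le> real (2*L) * real (nat (\<lfloor>4*\<Delta>\<rfloor> + 1))"
    using c0 by (simp only: of_nat_mult[symmetric] of_nat_le_iff)
  have fl: "of_int \<lfloor>4*\<Delta>\<rfloor> \<le> 4*\<Delta>" by (rule of_int_floor_le)
  have "0 \<le> \<lfloor>4*\<Delta>\<rfloor>" using D by simp
  hence "real (nat (\<lfloor>4*\<Delta>\<rfloor> + 1)) = real_of_rat (of_int \<lfloor>4*\<Delta>\<rfloor>) + 1" by simp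
  also have "\<dots> \<le> real_of_rat (4*\<Delta>) + 1" using fl by (simp only: add_le_cancel_right of_rat_less_eq)
  also have "\<dots> \<le> 5 * real_of_rat \<Delta>" using D by (simp add: of_rat_mult of_rat_less_eq)
  finally have e: "real (nat (\<lfloor>4*\<Delta>\<rfloor> + 1)) \<le> 5 * real_of_rat \<Delta>" .
  have "real (2*L) * real (nat (\<lfloor>4*\<Delta>\<rfloor> + 1)) \<le> real (2*L) * (5 * real_of_rat \<Delta>)"
    by (rule mult_left_mono[OF e]) simp
  also have "\<dots> = 5 * real_of_rat \<Delta> * real (card {a..<a+L} + card {b..<b+L})" by simp
  finally show ?thesis using c by linarith
qed

theorem mainTheorem15:
  shows "\<exists>C::real. C > 0 \<and>
    (\<forall>(n::nat) (m::nat) (f::nat \<Rightarrow> int) (g::nat \<Rightarrow> int) (fb::nat \<Rightarrow> rat) (gb::nat \<Rightarrow> rat)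
       (\<Delta>::rat) (a::nat) (b::nat) (L::nat).
       dconvex n fb \<and> dconvex m gb \<and>
       (\<forall>i\<le>n. fb i \<le> of_int (f i) \<and> of_int (f i) \<le> fb i + \<Delta>) \<and>
       (\<forall>j\<le>m. gb j \<le> of_int (g j) \<and> of_int (g j) \<le> gb j + \<Delta>) \<and>
       \<Delta> \<ge> 1 \<and>
       {a..<a+L} \<subseteq> {0..n} \<and> {b..<b+L} \<subseteq> {0..m} \<and>
       (\<forall>i\<in>{a..<a+L}. \<forall>j\<in>{b..<b+L}. relevant n m fb gb (2 * \<Delta>) i j)
       \<longrightarrow> real (card (sumset {(int i, f i) | i. i \<in> {a..<a+L}}
                               {(int j, g j) | j. j \<in> {b..<b+L}}))
           \<le> C * real_of_rat \<Delta> * real (card {a..<a+L} + card {b..<b+L}))"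
  apply (rule exI[of _ 5])
  apply (intro conjI)
   apply simp
  apply (intro allI impI)
  apply (elim conjE)
  apply (rule main_bound)
       apply assumption+
  done

end
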